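(* If $n\ge3$ is an odd integer, then $\lambda(\mathbb{Z}/n\mathbb{Z})=\frac1n\log2$.
   Context: For a compact abelian group $G$ with normalized Haar measure $\mu$ and (multiplicative) dual group of characters $\widehat{G}$, let $\mathbb{Z}[\widehat{G}]$ denote the ring of integral linear combinations of characters, regarded as functions on $G$. For $f\in\mathbb{Z}[\widehat{G}]$, the logarithmic Mahler measure over $G$ is $\mathsf{m}_G(f)=\int_G\log|f|\,d\mu$ (with $\log 0=-\infty$). The Lehmer constant of $G$ is $\lambda(G)=\inf\{\mathsf{m}_G(f): f\in\mathbb{Z}[\widehat{G}],\ \mathsf{m}_G(f)>0\}$. Here $\mathbb{Z}/n\mathbb{Z}$ is the finite cyclic group with the uniform probability measure; its characters are $\chi_k(j)=e^{2\pi i jk/n}$, $k=0,\dots,n-1$. *)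

theory Defs
  imports "HOL-Analysis.Analysis"
begin

definition zn_char :: "nat \<Rightarrow> nat \<Rightarrow> nat \<Rightarrow> complex" where
  "zn_char n k j = cis (2 * pi * real j * real k / real n)"

text \<open>An element of Z[dual group], given by integer coefficients c k of the characters chi_k (k < n),
  regarded as a function on Z/nZ.\<close>
definition zn_poly :: "nat \<Rightarrow> (nat \<Rightarrow> int) \<Rightarrow> nat \<Rightarrow> complex" where
  "zn_poly n c j = (\<Sum>k<n. of_int (c k) * zn_char n k j)"

definition mahler_zn :: "nat \<Rightarrow> (nat \<Rightarrow> int) \<Rightarrow> ereal" where
  "mahler_zn n c =
     (if \<exists>j<n. zn_poly n c j = 0 then -\<infinity>
      else ereal ((\<Sum>j<n. ln (cmod (zn_poly n c j))) / real n))"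

definition lehmer_zn :: "nat \<Rightarrow> ereal" where
  "lehmer_zn n = Inf {mahler_zn n c | c. mahler_zn n c > 0}"

end

theory Submission imports Defs "Jordan_Normal_Form.Determinant" "HOL-Number_Theory.Cong" begin

definition rz :: "nat \<Rightarrow> complex" where "rz n = cis (2 * pi / real n)"

lemma char_pow: "zn_char n k j = rz n ^ (j * k)"
  unfolding zn_char_def rz_def Complex.DeMoivre by (simp add: field_simps)

lemma rz_pow_eq1: assumes "n > 0" shows "rz n ^ m = 1 \<longleftrightarrow> n dvd m"
proof -
  have "rz n ^ m = exp(2 * of_real pi * \<i> * of_nat m / of_nat n)"
    by (simp only: rz_def Complex.DeMoivre) (simp add: cis_conv_exp field_simps)
  thus ?thesis using complex_root_unity_eq_1[of n m] assms by simp
qed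

lemma rz_pow_n: "n > 0 \<Longrightarrow> rz n ^ n = 1" using rz_pow_eq1 by auto

lemma rz_pow_mod: assumes "n > 0" shows "rz n ^ m = rz n ^ (m mod n)"
proof -
  have "rz n ^ m = rz n ^ (n * (m div n) + m mod n)" by simp
  also have "\<dots> = rz n ^ (m mod n)" unfolding power_add power_mult rz_pow_n[OF assms] by simp
  finally show ?thesis .
qed

lemma geom0: assumes "w ^ n = 1" "w \<noteq> (1::complex)" shows "(\<Sum>j<n. w ^ j) = 0"
  using assms by (simp add: sum_gp_strict)

definition Vm :: "nat \<Rightarrow> complex mat" where
  "Vm n = mat n n (\<lambda>(i,j). rz n ^ (i*j))"
definition Wm :: "nat \<Rightarrow> complex mat" where
  "Wm n = mat n n (\<lambda>(i,j). rz n ^ ((n - j) * i))"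
definition Cm :: "nat \<Rightarrow> (nat \<Rightarrow> int) \<Rightarrow> int mat" where
  "Cm n c = mat n n (\<lambda>(i,k). c ((k + n - i) mod n))"
definition Dm :: "nat \<Rightarrow> (nat \<Rightarrow> int) \<Rightarrow> complex mat" where
  "Dm n c = mat n n (\<lambda>(i,j). if i = j then zn_poly n c j else 0)"

lemma dvd_lemma: assumes "i < n" "k < (n::nat)" "n dvd i + n - k" shows "i = k"
proof -
  obtain q where q: "i + n - k = n * q" using assms(3) by blast
  have "q = 1"
  proof -
    have "q \<noteq> 0"
    proof
      assume "q = 0" with q have "i + n - k = 0" by simp
      with assms show False by linarith
    qed
    moreover have "q < 2" proof (rule ccontr)
      assume "\<not> q < 2" hence "n * q \<ge> n * 2" by simp
      thus False using q assms by linarith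
    qed
    ultimately show ?thesis by linarith
  qed
  thus ?thesis using q assms by simp
qed

lemma VW: assumes "n > 0" shows "Vm n * Wm n = of_nat n \<cdot>\<^sub>m 1\<^sub>m n"
proof (rule eq_matI)
  fix i k assume ik: "i < dim_row (of_nat n \<cdot>\<^sub>m 1\<^sub>m n :: complex mat)" "k < dim_col (of_nat n \<cdot>\<^sub>m 1\<^sub>m n :: complex mat)"
  hence i: "i < n" and k: "k < n" by auto
  let ?w = "rz n ^ (i + n - k)"
  have "(Vm n * Wm n) $$ (i,k) = (\<Sum>j<n. rz n ^ (i*j) * rz n ^ ((n - k) * j))"
    using i k by (simp add: Vm_def Wm_def scalar_prod_def atLeast0LessThan)
  also have "\<dots> = (\<Sum>j<n. ?w ^ j)"
    by (rule sum.cong) (use k in \<open>auto simp: power_add[symmetric] power_mult[symmetric] algebra_simps\<close>)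
  also have "\<dots> = (if i = k then of_nat n else 0)"
  proof (cases "i = k")
    case True
    hence "?w = 1" using rz_pow_n[OF assms] by simp
    thus ?thesis using True by simp
  next
    case False
    have "?w ^ n = (rz n ^ n) ^ (i + n - k)" by (simp add: power_mult[symmetric] mult.commute)
    hence "?w ^ n = 1" using rz_pow_n[OF assms] by simp
    moreover have "?w \<noteq> 1" using rz_pow_eq1[OF assms] dvd_lemma[OF i k] False by blast
    ultimately show ?thesis using False geom0 by simp
  qed
  also have "\<dots> = (of_nat n \<cdot>\<^sub>m 1\<^sub>m n :: complex mat) $$ (i,k)" using i k by simp
  finally show "(Vm n * Wm n) $$ (i,k) = (of_nat n \<cdot>\<^sub>m 1\<^sub>m n :: complex mat) $$ (i,k)" .
qed (auto simp: Vm_def Wm_def)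

lemma detV: assumes "n > 0" shows "det (Vm n) \<noteq> 0"
proof -
  have "det (Vm n) * det (Wm n) = det (of_nat n \<cdot>\<^sub>m 1\<^sub>m n :: complex mat)"
    using VW[OF assms] det_mult[of "Vm n" n "Wm n"] by (simp add: Vm_def Wm_def)
  also have "\<dots> = of_nat n ^ n" by simp
  finally show ?thesis using assms by auto
qed

lemma shift_bij: fixes n i :: nat assumes "n > 0" shows "bij_betw (\<lambda>m. (i + m) mod n) {..<n} {..<n}"
proof -
  have inj: "inj_on (\<lambda>m. (i + m) mod n) {..<n}"
  proof
    fix a b :: nat assume a: "a \<in> {..<n}" and b: "b \<in> {..<n}" and e: "(i + a) mod n = (i + b) mod n"
    hence "[i + a = i + b] (mod n)" by (simp add: cong_def)
    hence "[a = b] (mod n)" by (simp add: cong_add_lcancel_nat)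
    thus "a = b" using a b by (simp add: cong_def)
  qed
  moreover have "(\<lambda>m. (i + m) mod n) ` {..<n} \<subseteq> {..<n}" using assms by auto
  ultimately have "(\<lambda>m. (i + m) mod n) ` {..<n} = {..<n}" using endo_inj_surj by blast
  thus ?thesis using inj by (simp add: bij_betw_def)
qed

lemma circ: assumes "n > 0" shows "map_mat of_int (Cm n c) * Vm n = Vm n * Dm n c"
proof (rule eq_matI)
  fix i j assume "i < dim_row (Vm n * Dm n c)" "j < dim_col (Vm n * Dm n c)"
  hence i: "i < n" and j: "j < n" by (auto simp: Vm_def Dm_def)
  define g where "g k = of_int (c ((k + n - i) mod n)) * rz n ^ (k * j)" for k
  have "(map_mat of_int (Cm n c) * Vm n) $$ (i,j) = (\<Sum>k<n. g k)"
    using i j by (simp add: Vm_def Cm_def g_def scalar_prod_def atLeast0LessThan)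
  also have "\<dots> = (\<Sum>m<n. g ((i + m) mod n))"
    using sum.reindex_bij_betw[OF shift_bij[OF assms, of i], of g] by simp
  also have "\<dots> = (\<Sum>m<n. rz n ^ (i * j) * (of_int (c m) * rz n ^ (j * m)))"
  proof (rule sum.cong)
    fix m assume m: "m \<in> {..<n}"
    have "((i + m) mod n + n - i) mod n = ((i + m) mod n + (n - i)) mod n" using i by simp
    also have "\<dots> = (i + m + (n - i)) mod n" by (simp add: mod_add_left_eq)
    also have "\<dots> = m" using i m by simp
    finally have 1: "((i + m) mod n + n - i) mod n = m" .
    have "rz n ^ ((i + m) mod n * j) = (rz n ^ ((i + m) mod n)) ^ j" by (simp add: power_mult)
    also have "\<dots> = (rz n ^ (i + m)) ^ j" using rz_pow_mod[OF assms, of "i+m"] by simp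
    also have "\<dots> = rz n ^ (i * j) * rz n ^ (j * m)"
      by (simp add: power_mult[symmetric] power_add[symmetric] algebra_simps)
    finally show "g ((i + m) mod n) = rz n ^ (i * j) * (of_int (c m) * rz n ^ (j * m))"
      unfolding g_def 1 by simp
  qed simp
  also have "\<dots> = rz n ^ (i * j) * zn_poly n c j"
    by (simp add: zn_poly_def char_pow sum_distrib_left)
  also have "\<dots> = (Vm n * Dm n c) $$ (i,j)"
  proof -
    have "(Vm n * Dm n c) $$ (i,j) = (\<Sum>k\<in>{0..<n}. rz n ^ (i * k) * (if k = j then zn_poly n c j else 0))"
      using i j by (simp add: Vm_def Dm_def scalar_prod_def)
    also have "\<dots> = rz n ^ (i * j) * zn_poly n c j"
      using j by (simp add: if_distrib[of "\<lambda>x. _ * x"] cong: if_cong)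
    finally show ?thesis by simp
  qed
  finally show "(map_mat of_int (Cm n c) * Vm n) $$ (i,j) = (Vm n * Dm n c) $$ (i,j)" .
qed (auto simp: Vm_def Dm_def Cm_def)

lemma prod_det: assumes "n > 0" shows "(\<Prod>j<n. zn_poly n c j) = of_int (det (Cm n c))"
proof -
  have C: "map_mat of_int (Cm n c) \<in> carrier_mat n n" and V: "Vm n \<in> carrier_mat n n"
    and D: "Dm n c \<in> carrier_mat n n" by (auto simp: Cm_def Vm_def Dm_def)
  have "det (map_mat of_int (Cm n c)) * det (Vm n) = det (Vm n) * det (Dm n c)"
    using circ[OF assms, of c] det_mult[OF C V] det_mult[OF V D] by metis
  hence "det (Vm n) * det (map_mat of_int (Cm n c)) = det (Vm n) * det (Dm n c)"
    by (simp only: mult.commute)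
  hence "det (map_mat of_int (Cm n c) :: complex mat) = det (Dm n c)" using detV[OF assms]
    by (metis mult_left_cancel)
  moreover have "det (Dm n c) = (\<Prod>j<n. zn_poly n c j)"
    by (subst det_upper_triangular[OF _ D]) (auto simp: Dm_def prod_list_diag_prod atLeast0LessThan intro!: upper_triangularI)
  moreover have "det (map_mat of_int (Cm n c) :: complex mat) = of_int (det (Cm n c))"
    by (rule of_int_hom.hom_det)
  ultimately show ?thesis by metis
qed

lemma mahler_det: assumes "n > 0"
  shows "mahler_zn n c = (if det (Cm n c) = 0 then -\<infinity> else ereal (ln \<bar>real_of_int (det (Cm n c))\<bar> / real n))"
proof -
  have ex: "(\<exists>j<n. zn_poly n c j = 0) \<longleftrightarrow> det (Cm n c) = 0"
  proof -
    have "(\<exists>j<n. zn_poly n c j = 0) \<longleftrightarrow> (\<Prod>j<n. zn_poly n c j) = 0"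
      by (auto simp: prod_zero_iff)
    thus ?thesis using prod_det[OF assms, of c] by simp
  qed
  show ?thesis
  proof (cases "det (Cm n c) = 0")
    case True thus ?thesis using ex by (simp add: mahler_zn_def)
  next
    case False
    hence nz: "\<And>j. j \<in> {..<n} \<Longrightarrow> cmod (zn_poly n c j) \<noteq> 0" using ex by auto
    have "(\<Sum>j<n. ln (cmod (zn_poly n c j))) = ln (\<Prod>j<n. cmod (zn_poly n c j))"
      by (rule ln_prod[symmetric]) (use nz in auto)
    also have "(\<Prod>j<n. cmod (zn_poly n c j)) = cmod (\<Prod>j<n. zn_poly n c j)" by (rule prod_norm)
    also have "\<dots> = \<bar>real_of_int (det (Cm n c))\<bar>" using prod_det[OF assms, of c] by simp
    finally show ?thesis using False ex by (simp add: mahler_zn_def)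
  qed
qed

lemma prod_witness: fixes n :: nat assumes "odd n" "n > 1"
  shows "(\<Prod>j<n. 1 + rz n ^ j) = 2"
proof -
  have n0: "n > 0" using assms by simp
  have cop: "coprime 2 n" using assms(1) by (simp add: coprime_left_2_iff_odd)
  let ?A = "{1..<n}"
  have bij: "bij_betw (\<lambda>j. (2 * j) mod n) ?A ?A"
  proof -
    have inj: "inj_on (\<lambda>j. (2 * j) mod n) ?A"
    proof
      fix a b :: nat assume a: "a \<in> ?A" and b: "b \<in> ?A" and e: "(2 * a) mod n = (2 * b) mod n"
      hence "[2 * a = 2 * b] (mod n)" by (simp add: cong_def)
      hence "[a = b] (mod n)" using cop by (simp add: cong_mult_lcancel_nat)
      thus "a = b" using a b by (simp add: cong_def)
    qed
    moreover have "(\<lambda>j. (2 * j) mod n) ` ?A \<subseteq> ?A"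
    proof
      fix x assume "x \<in> (\<lambda>j. (2 * j) mod n) ` ?A"
      then obtain j where j: "j \<in> ?A" "x = (2 * j) mod n" by blast
      have "\<not> n dvd j" using j by (auto dest: dvd_imp_le)
      hence "\<not> n dvd 2 * j" using cop coprime_dvd_mult_right_iff[of n 2 j] by (simp add: coprime_commute)
      hence "x \<noteq> 0" using j by (simp add: dvd_eq_mod_eq_0)
      thus "x \<in> ?A" using j n0 by simp
    qed
    ultimately have "(\<lambda>j. (2 * j) mod n) ` ?A = ?A" using endo_inj_surj by blast
    thus ?thesis using inj by (simp add: bij_betw_def)
  qed
  have Anz: "(\<Prod>j\<in>?A. 1 - rz n ^ j) \<noteq> 0"
  proof -
    have "\<And>j. j \<in> ?A \<Longrightarrow> 1 - rz n ^ j \<noteq> 0"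
      using rz_pow_eq1[OF n0] by (auto dest: dvd_imp_le)
    thus ?thesis by (simp add: prod_zero_iff)
  qed
  have "(\<Prod>j\<in>?A. 1 + rz n ^ j) * (\<Prod>j\<in>?A. 1 - rz n ^ j) = (\<Prod>j\<in>?A. 1 - rz n ^ (2 * j))"
    by (simp add: prod.distrib[symmetric] power_mult algebra_simps power2_eq_square)
  also have "\<dots> = (\<Prod>j\<in>?A. 1 - rz n ^ ((2 * j) mod n))"
    using rz_pow_mod[OF n0] by simp
  also have "\<dots> = (\<Prod>j\<in>?A. 1 - rz n ^ j)"
    using prod.reindex_bij_betw[OF bij, of "\<lambda>j. 1 - rz n ^ j"] by simp
  finally have "(\<Prod>j\<in>?A. 1 + rz n ^ j) = 1" using Anz by simp
  moreover have "{..<n} = insert 0 ?A" using n0 by auto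
  ultimately show ?thesis by simp
qed

definition cw :: "nat \<Rightarrow> int" where "cw k = (if k \<le> 1 then 1 else 0)"

lemma poly_cw: assumes "n > 1" shows "zn_poly n cw j = 1 + rz n ^ j"
proof -
  have "zn_poly n cw j = (\<Sum>k\<in>{0,1}. of_int (cw k) * rz n ^ (j * k))"
    unfolding zn_poly_def char_pow
    by (rule sum.mono_neutral_right) (use assms in \<open>auto simp: cw_def\<close>)
  thus ?thesis by (simp add: cw_def)
qed

theorem corollary4p7:
  fixes n :: nat
  assumes "n \<ge> 3" and "odd n"
  shows "lehmer_zn n = ereal (ln 2 / real n)"
proof -
  have n0: "n > 0" and n1: "n > 1" using assms by auto
  let ?S = "{mahler_zn n c | c. mahler_zn n c > 0}"
  have detw: "det (Cm n cw) = 2"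
  proof -
    have "(\<Prod>j<n. zn_poly n cw j) = 2" using prod_witness[OF assms(2) n1] poly_cw[OF n1] by simp
    thus ?thesis using prod_det[OF n0, of cw] by (metis of_int_eq_numeral_iff)
  qed
  have mw: "mahler_zn n cw = ereal (ln 2 / real n)" using mahler_det[OF n0, of cw] detw by simp
  have mem: "ereal (ln 2 / real n) \<in> ?S"
    using mw n1 by (auto intro!: exI[of _ cw] divide_pos_pos)
  have low: "ereal (ln 2 / real n) \<le> x" if "x \<in> ?S" for x
  proof -
    obtain c where c: "x = mahler_zn n c" "mahler_zn n c > 0" using \<open>x \<in> ?S\<close> by blast
    let ?N = "det (Cm n c)"
    have N0: "?N \<noteq> 0" using c mahler_det[OF n0, of c] by (auto split: if_splits)
    hence x: "x = ereal (ln \<bar>real_of_int ?N\<bar> / real n)" using c mahler_det[OF n0, of c] by simp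
    hence "ln \<bar>real_of_int ?N\<bar> > 0" using c n0 by (simp add: zero_less_divide_iff)
    hence "\<bar>real_of_int ?N\<bar> > 1" using N0 by (simp add: ln_gt_zero_iff)
    hence "\<bar>?N\<bar> \<ge> 2" by linarith
    hence "\<bar>real_of_int ?N\<bar> \<ge> 2" by linarith
    hence "ln 2 \<le> ln \<bar>real_of_int ?N\<bar>" by simp
    hence "ln 2 / real n \<le> ln \<bar>real_of_int ?N\<bar> / real n" using n0 by (simp add: divide_right_mono)
    thus ?thesis using x by simp
  qed
  show ?thesis unfolding lehmer_zn_def
    by (rule antisym) (auto intro: Inf_lower[OF mem] Inf_greatest low)
qed
end
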